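(* Let $K$ be a field, $A=\{\alpha_1,\dots,\alpha_m\}\subset K$ and $B=\{\beta_1,\dots,\beta_n\}\subset K$ finite sets with $|A|=m$, $|B|=n$, $f=\prod_{i=1}^m(x-\alpha_i)$, $g=\prod_{j=1}^n(x-\beta_j)$. Let $0\le d\le n-1$ with $d\le m$. Then $$\operatorname{Syl}_{0,d}(A,B)=\operatorname{Sres}_d(f,g).$$
   Context: For finite sets $Y,Z$, $\mathcal{R}(Y,Z):=\prod_{y\in Y,z\in Z}(y-z)$ (equal to $1$ if $Y$ or $Z$ is empty), and $\mathcal{R}(x,Z):=\mathcal{R}(\{x\},Z)$. For $0\le p\le m$, $0\le q\le n$, $$\operatorname{Syl}_{p,q}(A,B)(x):=\sum_{\substack{A'\subset A,\ B'\subset B\\ |A'|=p,\ |B'|=q}}\mathcal{R}(A',B')\,\mathcal{R}(A\setminus A',B\setminus B')\,\frac{\mathcal{R}(x,A')\,\mathcal{R}(x,B')}{\mathcal{R}(A',A\setminus A')\,\mathcal{R}(B',B\setminus B')}.$$ Write $f=\sum_{i=0}^m f_ix^i$, $g=\sum_{i=0}^ng_ix^i$ with $f_i=g_i=0$ outside the natural ranges. For $d\le\min\{m,n\}$ if $m\ne n$, or $d<m=n$, the $d$-th subresultant $\operatorname{Sres}_d(f,g)(x)$ is the determinant of the $(m+n-2d)\times(m+n-2d)$ matrix with rows $x^jf(x)$ for $j=n-d-1,\dots,0$ followed by rows $x^jg(x)$ for $j=m-d-1,\dots,0$, where the row corresponding to a polynomial $h=x^jf$ or $x^jg$ has as its first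 $m+n-2d-1$ entries the coefficients of $x^{m+n-d-1},x^{m+n-d-2},\dots,x^{d+1}$ in $h$, and as last entry the polynomial $h(x)$ itself. *)

theory Defs
  imports "HOL-Computational_Algebra.Polynomial" "Jordan_Normal_Form.Determinant"
begin

definition Res :: "'a::comm_ring_1 set \<Rightarrow> 'a set \<Rightarrow> 'a" where
  "Res Y Z = (\<Prod>y\<in>Y. \<Prod>z\<in>Z. (y - z))"

definition Res_x :: "'a::comm_ring_1 set \<Rightarrow> 'a poly" where
  "Res_x Z = (\<Prod>z\<in>Z. [:- z, 1:])"

definition Syl :: "nat \<Rightarrow> nat \<Rightarrow> 'a::field set \<Rightarrow> 'a set \<Rightarrow> 'a poly" where
  "Syl p q A B =
     (\<Sum>A'\<in>{A'. A' \<subseteq> A \<and> card A' = p}. \<Sum>B'\<in>{B'. B' \<subseteq> B \<and> card B' = q}.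
        smult (Res A' B' * Res (A - A') (B - B') / (Res A' (A - A') * Res B' (B - B')))
              (Res_x A' * Res_x B'))"

definition sres_row :: "'a::comm_ring_1 poly \<Rightarrow> 'a poly \<Rightarrow> nat \<Rightarrow> nat \<Rightarrow> 'a poly" where
  "sres_row f g d i =
     (let m = degree f; n = degree g in
      if i < n - d then monom 1 (n - d - 1 - i) * f
      else monom 1 (m - d - 1 - (i - (n - d))) * g)"

text \<open>The d-th subresultant: determinant of the (m+n-2d) square matrix whose row for h has
  entries the coefficients of x^(m+n-d-1), ..., x^(d+1) in h, and last entry h itself.\<close>
definition Sres :: "'a::comm_ring_1 poly \<Rightarrow> 'a poly \<Rightarrow> nat \<Rightarrow> 'a poly" where
  "Sres f g d =
     (let m = degree f; n = degree g; N = m + n - 2 * d in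
      det (mat N N (\<lambda>(i, j).
        (let h = sres_row f g d i in
         if j = N - 1 then h else [: coeff h (m + n - d - 1 - j) :]))))"

end

theory Submission
  imports Defs
begin


definition pk :: "nat set \<Rightarrow> nat \<Rightarrow> nat" where
  "pk I j = sorted_list_of_set I ! j"

lemma pk_in: "finite I \<Longrightarrow> j < card I \<Longrightarrow> pk I j \<in> I"
  unfolding pk_def
  by (metis length_sorted_list_of_set nth_mem set_sorted_list_of_set)

lemma pk_inj: "finite I \<Longrightarrow> inj_on (pk I) {0..<card I}"
  unfolding pk_def inj_on_def
  by (simp add: nth_eq_iff_index_eq)

lemma pk_image: "finite I \<Longrightarrow> pk I ` {0..<card I} = I"
proof -
  assume fI: "finite I"
  let ?xs = "sorted_list_of_set I"
  have "pk I ` {0..<card I} = set ?xs"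
    unfolding pk_def by (auto simp: in_set_conv_nth)
  thus ?thesis using fI by simp
qed

lemma cauchy_binet:
  fixes A B :: "'a::comm_ring_1 mat"
  assumes A: "A \<in> carrier_mat e n" and B: "B \<in> carrier_mat n e"
  shows "det (A * B) = (\<Sum>I\<in>{I. I \<subseteq> {0..<n} \<and> card I = e}.
     det (mat e e (\<lambda>(i,j). A $$ (i, pk I j))) * det (mat e e (\<lambda>(i,j). B $$ (pk I i, j))))"
proof -
  let ?U = "{0..<e}"
  let ?F = "{f. (\<forall>i\<in>?U. f i \<in> {0..<n}) \<and> (\<forall>i. i \<notin> ?U \<longrightarrow> f i = i)}"
  let ?Fi = "{f \<in> ?F. inj_on f ?U}"
  let ?g = "\<lambda>f. (\<Prod>i\<in>?U. A $$ (i, f i)) * det (mat\<^sub>r e e (\<lambda>i. row B (f i)))"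
  let ?Is = "{I. I \<subseteq> {0..<n} \<and> card I = e}"
  let ?Ps = "{p. p permutes ?U}"
  let ?G = "\<lambda>(I,p) i. if i < e then pk I (p i) else i"
  let ?CA = "\<lambda>I. mat e e (\<lambda>(i,j). A $$ (i, pk I j))"
  let ?RB = "\<lambda>I. mat e e (\<lambda>(i,j). B $$ (pk I i, j))"
  have fF: "finite ?F" by (rule finite_bounded_functions, auto)
  have "det (A * B) = (\<Sum>f\<in>?F. det (mat\<^sub>r e e (\<lambda>i. A $$ (i, f i) \<cdot>\<^sub>v row B (f i))))"
    unfolding mat_mul_finsum_alt[OF A B]
    by (rule det_linear_rows_sum, insert B, auto)
  also have "\<dots> = (\<Sum>f\<in>?F. ?g f)"
    by (rule sum.cong[OF refl], rule det_rows_mul, insert B, auto)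
  also have "\<dots> = (\<Sum>f\<in>?Fi. ?g f) + (\<Sum>f\<in>?F - ?Fi. ?g f)"
  proof -
    have "?Fi \<subseteq> ?F" by blast
    from sum.subset_diff[OF this fF, of ?g] show ?thesis by (simp only: add.commute)
  qed
  also have "(\<Sum>f\<in>?F - ?Fi. ?g f) = 0"
  proof (rule sum.neutral, rule ballI)
    fix f assume f: "f \<in> ?F - ?Fi"
    then obtain i j where ij: "f i = f j" "i \<noteq> j" "i < e" "j < e"
      unfolding inj_on_def by auto
    have "det (mat\<^sub>r e e (\<lambda>i. row B (f i))) = 0"
      by (rule det_identical_rows[OF _ ij(2-4)], insert ij B, auto)
    thus "?g f = 0" by simp
  qed
  also have "(\<Sum>f\<in>?Fi. ?g f) = (\<Sum>x\<in>Sigma ?Is (\<lambda>_. ?Ps). ?g (?G x))"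
  proof (rule sum.reindex_cong)
    show "inj_on ?G (Sigma ?Is (\<lambda>_. ?Ps))"
    proof (rule inj_onI)
      fix x y assume x: "x \<in> Sigma ?Is (\<lambda>_. ?Ps)" and y: "y \<in> Sigma ?Is (\<lambda>_. ?Ps)"
        and eqxy: "?G x = ?G y"
      obtain I p where xIp: "x = (I,p)" by (cases x)
      obtain J q where yJq: "y = (J,q)" by (cases y)
      have I: "I \<subseteq> {0..<n}" "card I = e" and p: "p permutes ?U"
        and J: "J \<subseteq> {0..<n}" "card J = e" and q: "q permutes ?U"
        using x y xIp yJq by auto
      have eq: "?G (I,p) = ?G (J,q)" using eqxy xIp yJq by simp
      have fI: "finite I" "finite J" using I J finite_subset by auto
      have imI: "?G (I,p) ` ?U = I"
      proof -
        have "?G (I,p) ` ?U = pk I ` (p ` ?U)" by (auto simp: image_iff)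
        also have "p ` ?U = ?U" using permutes_image[OF p] .
        finally show ?thesis using pk_image[OF fI(1)] I by simp
      qed
      have imJ: "?G (J,q) ` ?U = J"
      proof -
        have "?G (J,q) ` ?U = pk J ` (q ` ?U)" by (auto simp: image_iff)
        also have "q ` ?U = ?U" using permutes_image[OF q] .
        finally show ?thesis using pk_image[OF fI(2)] J by simp
      qed
      have IJ: "I = J" using imI imJ eq by metis
      have "p = q"
      proof
        fix i show "p i = q i"
        proof (cases "i < e")
          case True
          hence "pk I (p i) = pk I (q i)" using fun_cong[OF eq, of i] IJ by simp
          moreover have "p i \<in> {0..<card I}" "q i \<in> {0..<card I}"
            using permutes_in_image[OF p] permutes_in_image[OF q] True I by auto
          ultimately show ?thesis using pk_inj[OF fI(1)] unfolding inj_on_def by blast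
        next
          case False
          thus ?thesis using permutes_not_in[OF p] permutes_not_in[OF q] by auto
        qed
      qed
      thus "x = y" using IJ xIp yJq by simp
    qed
    show "?Fi = ?G ` Sigma ?Is (\<lambda>_. ?Ps)"
    proof
      show "?Fi \<subseteq> ?G ` Sigma ?Is (\<lambda>_. ?Ps)"
      proof
        fix f assume f: "f \<in> ?Fi"
        define I where "I = f ` ?U"
        have fI: "finite I" unfolding I_def by auto
        have cI: "card I = e" unfolding I_def using f card_image[of f ?U] by auto
        have II: "I \<subseteq> {0..<n}" unfolding I_def using f by auto
        define p where "p = (\<lambda>i. if i < e then (THE j. j < e \<and> pk I j = f i) else i)"
        have pex: "\<And>i. i < e \<Longrightarrow> p i < e \<and> pk I (p i) = f i"
        proof -
          fix i assume i: "i < e"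
          have "f i \<in> I" unfolding I_def using i by auto
          hence "f i \<in> pk I ` {0..<card I}" unfolding pk_image[OF fI] .
          then obtain j where j: "j < e" "pk I j = f i" using cI by auto
          have "\<exists>!j. j < e \<and> pk I j = f i"
            using j pk_inj[OF fI] cI unfolding inj_on_def by auto
          hence "(THE j. j < e \<and> pk I j = f i) < e \<and> pk I (THE j. j < e \<and> pk I j = f i) = f i"
            by (rule theI')
          thus "p i < e \<and> pk I (p i) = f i" using i unfolding p_def by simp
        qed
        have pp: "p permutes ?U"
        proof (rule inj_on_nat_permutes)
          show "inj_on p ?U"
          proof (rule inj_onI)
            fix i j assume ij: "i \<in> ?U" "j \<in> ?U" "p i = p j"
            hence "f i = f j" using pex by (metis atLeastLessThan_iff)
            thus "i = j" using f ij by (auto simp: inj_on_def)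
          qed
          show "p \<in> ?U \<rightarrow> ?U" using pex by auto
          show "\<And>i. i \<notin> ?U \<Longrightarrow> p i = i" unfolding p_def by auto
        qed simp
        have "f = ?G (I,p)"
        proof
          fix i show "f i = ?G (I,p) i" using pex f by (cases "i < e", auto)
        qed
        thus "f \<in> ?G ` Sigma ?Is (\<lambda>_. ?Ps)" using II cI pp by blast
      qed
      show "?G ` Sigma ?Is (\<lambda>_. ?Ps) \<subseteq> ?Fi"
      proof
        fix f assume "f \<in> ?G ` Sigma ?Is (\<lambda>_. ?Ps)"
        then obtain I p where I: "I \<subseteq> {0..<n}" "card I = e" and p: "p permutes ?U"
          and fG: "f = ?G (I,p)" by auto
        have fI: "finite I" using I finite_subset by auto
        have pU: "\<And>i. i < e \<Longrightarrow> p i < e" using permutes_in_image[OF p] by auto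
        have "?G (I,p) \<in> ?F" using pk_in[OF fI] I pU by (auto simp: subset_iff)
        moreover have "inj_on (?G (I,p)) ?U"
        proof (rule inj_onI)
          fix i j assume ij: "i \<in> ?U" "j \<in> ?U" "?G (I,p) i = ?G (I,p) j"
          hence "pk I (p i) = pk I (p j)" by auto
          hence "p i = p j" using pk_inj[OF fI] pU ij(1,2) I unfolding inj_on_def by auto
          thus "i = j" using permutes_inj[OF p] unfolding inj_def by auto
        qed
        ultimately show "f \<in> ?Fi" unfolding fG by blast
      qed
    qed
  qed simp
  also have "\<dots> = (\<Sum>I\<in>?Is. \<Sum>p\<in>?Ps. ?g (?G (I,p)))"
    unfolding sum.cartesian_product by (rule sum.cong, auto)
  also have "\<dots> = (\<Sum>I\<in>?Is. det (?CA I) * det (?RB I))"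
  proof (rule sum.cong[OF refl])
    fix I assume I: "I \<in> ?Is"
    have fI: "finite I" using I finite_subset by auto
    have pkn: "\<And>j. j < e \<Longrightarrow> pk I j < n" using pk_in[OF fI] I by (auto simp: subset_iff)
    have "(\<Sum>p\<in>?Ps. ?g (?G (I,p))) = (\<Sum>p\<in>?Ps. (signof p * (\<Prod>i\<in>?U. ?CA I $$ (i, p i))) * det (?RB I))"
    proof (rule sum.cong[OF refl])
      fix p assume p: "p \<in> ?Ps"
      hence p: "p permutes ?U" by simp
      have pU: "\<And>i. i < e \<Longrightarrow> p i < e" using permutes_in_image[OF p] by auto
      have 1: "(\<Prod>i\<in>?U. A $$ (i, ?G (I,p) i)) = (\<Prod>i\<in>?U. ?CA I $$ (i, p i))"
        by (rule prod.cong, auto simp: pU)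
      have 2: "mat\<^sub>r e e (\<lambda>i. row B (?G (I,p) i)) = mat e e (\<lambda>(i,j). ?RB I $$ (p i, j))"
        by (rule eq_matI, insert B pU pkn, auto)
      have 3: "det (mat e e (\<lambda>(i,j). ?RB I $$ (p i, j))) = signof p * det (?RB I)"
        by (rule det_permute_rows[OF _ p], auto)
      show "?g (?G (I,p)) = (signof p * (\<Prod>i\<in>?U. ?CA I $$ (i, p i))) * det (?RB I)"
        unfolding 1 2 3 by (simp add: ac_simps)
    qed
    also have "\<dots> = (\<Sum>p\<in>?Ps. signof p * (\<Prod>i\<in>?U. ?CA I $$ (i, p i))) * det (?RB I)"
      by (simp add: sum_distrib_right)
    also have "(\<Sum>p\<in>?Ps. signof p * (\<Prod>i\<in>?U. ?CA I $$ (i, p i))) = det (?CA I)"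
      by (rule det_def'[symmetric], auto)
    finally show "(\<Sum>p\<in>?Ps. ?g (?G (I,p))) = det (?CA I) * det (?RB I)" .
  qed
  finally show ?thesis by simp
qed




definition rowv :: "nat \<Rightarrow> nat \<Rightarrow> 'a::comm_ring_1 poly \<Rightarrow> nat \<Rightarrow> 'a poly" where
  "rowv N k h j = (if j = N - 1 then h else [:coeff h (k - 1 - j):])"

definition rmat :: "nat \<Rightarrow> nat \<Rightarrow> nat \<Rightarrow> (nat \<Rightarrow> 'a::comm_ring_1 poly) \<Rightarrow> 'a poly mat" where
  "rmat R N k hs = mat R N (\<lambda>(i,j). rowv N k (hs i) j)"

lemma rmat_carrier[simp]: "rmat R N k hs \<in> carrier_mat R N"
  unfolding rmat_def by simp

lemma rmat_dims[simp]: "dim_row (rmat R N k hs) = R" "dim_col (rmat R N k hs) = N"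
  unfolding rmat_def by simp_all

lemma rmat_index[simp]: "i < R \<Longrightarrow> j < N \<Longrightarrow> rmat R N k hs $$ (i,j) = rowv N k (hs i) j"
  unfolding rmat_def by simp

lemma rowv_sum: "rowv N k (\<Sum>l<L. smult (c l) (gs l)) j = (\<Sum>l<L. [:c l:] * rowv N k (gs l) j)"
  unfolding rowv_def
  by (auto simp: coeff_sum sum_to_poly)

lemma rmat_lin:
  assumes "\<And>i. i < R \<Longrightarrow> hs i = (\<Sum>l<L. smult (c i l) (gs l))"
  shows "rmat R N k hs = mat R L (\<lambda>(i,l). [:c i l:]) * rmat L N k gs"
proof (rule eq_matI)
  fix i j assume i: "i < dim_row (mat R L (\<lambda>(i,l). [:c i l:]) * rmat L N k gs)"
    and j: "j < dim_col (mat R L (\<lambda>(i,l). [:c i l:]) * rmat L N k gs)"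
  hence i: "i < R" and j: "j < N" by auto
  have "(mat R L (\<lambda>(i,l). [:c i l:]) * rmat L N k gs) $$ (i,j) = (\<Sum>l<L. [:c i l:] * rowv N k (gs l) j)"
    using i j by (auto simp: scalar_prod_def lessThan_atLeast0 intro!: sum.cong)
  also have "\<dots> = rowv N k (hs i) j" unfolding assms[OF i] rowv_sum ..
  finally show "rmat R N k hs $$ (i,j) = (mat R L (\<lambda>(i,l). [:c i l:]) * rmat L N k gs) $$ (i,j)"
    using i j by simp
qed auto

lemma Sres_rmat:
  "Sres f g d = det (rmat (degree f + degree g - 2 * d) (degree f + degree g - 2 * d)
     (degree f + degree g - d) (sres_row f g d))"
  unfolding Sres_def rmat_def rowv_def Let_def
  by (rule arg_cong[of _ _ det], rule eq_matI, auto)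




lemma coeff_div_zero:
  fixes p g :: "'a::field poly"
  assumes g: "g \<noteq> 0" and deg: "degree p < degree g + t" and l: "t \<le> l"
  shows "coeff (p div g) l = 0"
proof (cases "p div g = 0")
  case False
  let ?q = "p div g" and ?r = "p mod g"
  have pq: "p = ?q * g + ?r" by simp
  have dqg: "degree (?q * g) = degree ?q + degree g" using False g by (rule degree_mult_eq)
  have "degree ?r < degree g \<or> ?r = 0" using degree_mod_less[OF g, of p] by auto
  hence "degree ?r < degree (?q * g) \<or> ?r = 0" using dqg by auto
  hence "degree p = degree (?q * g)"
    by (metis pq add.right_neutral degree_add_eq_left)
  hence "degree ?q < t" using dqg deg by simp
  thus ?thesis using l by (simp add: coeff_eq_0)
qed simp

lemma poly_sum_monoms_lt:
  assumes "\<And>l. t \<le> l \<Longrightarrow> coeff q l = 0"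
  shows "(\<Sum>i<t. monom (coeff q i) i) = q"
  by (rule poly_eqI, insert assms, auto simp: coeff_sum coeff_monom)

lemma stepA:
  fixes f g :: "'a::field poly"
  assumes g: "g \<noteq> 0" and dn: "d < degree g" and dm: "d \<le> degree f"
    and e: "e = degree g - d" and m': "m' = degree f - d"
  shows "Sres f g d = det (rmat (e+m') (e+m') (degree g + m')
     (\<lambda>i. if i < e then (monom 1 (e-1-i) * f) mod g else monom 1 (m'-1-(i-e)) * g))"
    (is "_ = det (rmat ?N ?N ?k ?h')")
proof -
  let ?hs = "sres_row f g d"
  have N: "degree f + degree g - 2 * d = ?N" and k: "degree f + degree g - d = ?k"
    using dn dm e m' by auto
  define c where "c = (\<lambda>i l. (if l = i then 1 else 0) +
     (if i < e \<and> e \<le> l then coeff (monom 1 (e-1-i) * f div g) (m'-1-(l-e)) else (0::'a)))"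
  have hs: "?hs i = (\<Sum>l<?N. smult (c i l) (?h' l))" if i: "i < ?N" for i
  proof (cases "i < e")
    case False
    have "(\<Sum>l<?N. smult (c i l) (?h' l)) = (\<Sum>l<?N. if l = i then ?h' l else 0)"
      by (rule sum.cong, auto simp: c_def False)
    also have "\<dots> = ?h' i" using i by simp
    also have "\<dots> = ?hs i" using False unfolding sres_row_def Let_def e m' by auto
    finally show ?thesis by (rule sym)
  next
    case True
    let ?p = "monom 1 (e-1-i) * f" 
    let ?q = "?p div g"
    have degp: "degree ?p < degree g + m'"
    proof -
      have "degree ?p \<le> degree (monom (1::'a) (e-1-i)) + degree f" by (rule degree_mult_le)
      moreover have "degree (monom (1::'a) (e-1-i)) \<le> e-1-i" by (rule degree_monom_le)
      ultimately have "degree ?p \<le> (e-1-i) + degree f" by linarith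
      thus ?thesis using True dn dm e m' by linarith
    qed
    have cq: "\<And>l. m' \<le> l \<Longrightarrow> coeff ?q l = 0" by (rule coeff_div_zero[OF g degp])
    have "(\<Sum>l<?N. smult (c i l) (?h' l)) =
        (\<Sum>l<?N. (if l = i then ?h' l else 0) + (if e \<le> l then smult (coeff ?q (m'-1-(l-e))) (?h' l) else 0))"
      using True by (intro sum.cong, auto simp: c_def)
    also have "\<dots> = (\<Sum>l<?N. if l = i then ?h' l else 0) + (\<Sum>l<?N. if e \<le> l then smult (coeff ?q (m'-1-(l-e))) (?h' l) else 0)"
      by (rule sum.distrib)
    also have "(\<Sum>l<?N. if l = i then ?h' l else 0) = ?h' i" using i by (simp only: sum.delta finite_lessThan lessThan_iff if_True)
    also have "(\<Sum>l<?N. if e \<le> l then smult (coeff ?q (m'-1-(l-e))) (?h' l) else 0) =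
       (\<Sum>l<?N. if e \<le> l then smult (coeff ?q (m'-1-(l-e))) (monom 1 (m'-1-(l-e)) * g) else 0)"
      by (rule sum.cong[OF refl], simp)
    also have "(\<Sum>l<?N. if e \<le> l then smult (coeff ?q (m'-1-(l-e))) (monom 1 (m'-1-(l-e)) * g) else 0)
        = (\<Sum>l\<in>{e..<?N}. smult (coeff ?q (m'-1-(l-e))) (monom 1 (m'-1-(l-e)) * g))"
      by (rule sum.mono_neutral_cong_right, auto)
    also have "\<dots> = (\<Sum>t<m'. smult (coeff ?q t) (monom 1 t * g))"
    proof (rule sum.reindex_bij_witness[of _ "\<lambda>t. e + (m' - 1 - t)" "\<lambda>l. m' - 1 - (l - e)"])
    qed auto
    also have "\<dots> = (\<Sum>t<m'. monom (coeff ?q t) t) * g"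
      unfolding sum_distrib_right by (rule sum.cong[OF refl], simp add: smult_monom flip: mult_smult_left)
    also have "(\<Sum>t<m'. monom (coeff ?q t) t) = ?q" by (rule poly_sum_monoms_lt[OF cq])
    finally have "(\<Sum>l<?N. smult (c i l) (?h' l)) = ?p mod g + ?q * g" using True by simp
    also have "\<dots> = ?p" by simp
    also have "\<dots> = ?hs i" using True unfolding sres_row_def Let_def e by auto
    finally show ?thesis by (rule sym)
  qed
  have "Sres f g d = det (rmat ?N ?N ?k ?hs)" unfolding Sres_rmat N k ..
  also have "rmat ?N ?N ?k ?hs = mat ?N ?N (\<lambda>(i,l). [:c i l:]) * rmat ?N ?N ?k ?h'"
    by (rule rmat_lin, rule hs)
  also have "det \<dots> = det (mat ?N ?N (\<lambda>(i,l). [:c i l:])) * det (rmat ?N ?N ?k ?h')"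
    by (rule det_mult, auto)
  also have "det (mat ?N ?N (\<lambda>(i,l). [:c i l:])) = 1"
  proof -
    have "det (mat ?N ?N (\<lambda>(i,l). [:c i l:])) = prod_list (diag_mat (mat ?N ?N (\<lambda>(i,l). [:c i l:])))"
      by (rule det_upper_triangular, auto simp: upper_triangular_def c_def)
    also have "\<dots> = 1"
      by (subst prod_list_diag_prod, auto simp: c_def intro!: prod.neutral)
    finally show ?thesis .
  qed
  finally show ?thesis by simp
qed




lemma stepB:
  fixes f g :: "'a::field poly"
  assumes lg: "lead_coeff g = 1" and n: "degree g = n" and e: "0 < e"
  shows "det (rmat (e+m') (e+m') (n + m')
     (\<lambda>i. if i < e then (monom 1 (e-1-i) * f) mod g else monom 1 (m'-1-(i-e)) * g))
   = (-1)^(e*m') * det (rmat e e n (\<lambda>i. (monom 1 (e-1-i) * f) mod g))"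
proof -
  let ?r = "\<lambda>i. (monom 1 (e-1-i) * f) mod g"
  let ?h = "\<lambda>i. if i < e then ?r i else monom 1 (m'-1-(i-e)) * g"
  let ?M = "rmat (e+m') (e+m') (n + m') ?h"
  let ?M2 = "mat (e + m') (e + m') (\<lambda>(i,j). ?M $$ (i, if j < e then j + m' else j - e))"
  let ?UL = "rmat e e n ?r"
  let ?LL = "mat m' e (\<lambda>(i,j). ?M2 $$ (i + e, j))"
  let ?LR = "mat m' m' (\<lambda>(i,j). ?M $$ (i + e, j))"
  have g0: "g \<noteq> 0" using lg by auto
  have degr: "\<And>i k. n \<le> k \<Longrightarrow> coeff (?r i) k = 0"
  proof -
    fix i k assume k: "n \<le> k"
    have "?r i = 0 \<or> degree (?r i) < n" using degree_mod_less[OF g0, of "monom 1 (e-1-i) * f"] n by simp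
    thus "coeff (?r i) k = 0"
    proof
      assume "?r i = 0" thus ?thesis by simp
    next
      assume "degree (?r i) < n" thus ?thesis using k by (intro coeff_eq_0) simp
    qed
  qed
  have "det ?M = (-1)^(e*m') * det ?M2"
    by (rule det_swap_cols, simp)
  also have "?M2 = four_block_mat ?UL (0\<^sub>m e m') ?LL ?LR"
  proof (rule eq_matI)
    fix i j assume i: "i < dim_row (four_block_mat ?UL (0\<^sub>m e m') ?LL ?LR)"
      and j: "j < dim_col (four_block_mat ?UL (0\<^sub>m e m') ?LL ?LR)"
    hence i: "i < e + m'" and j: "j < e + m'" by auto
    show "?M2 $$ (i,j) = four_block_mat ?UL (0\<^sub>m e m') ?LL ?LR $$ (i,j)"
    proof (cases "i < e")
      case True
      show ?thesis
      proof (cases "j < e")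
        case True
        thus ?thesis using \<open>i < e\<close> i j e by (auto simp: rowv_def)
      next
        case False
        have "?M2 $$ (i,j) = [:coeff (?r i) (n + m' - 1 - (j - e)):]"
          using \<open>i < e\<close> False i j e by (auto simp: rowv_def)
        also have "\<dots> = 0" using degr[of "n + m' - 1 - (j - e)" i] False j by auto
        finally show ?thesis using \<open>i < e\<close> False i j by simp
      qed
    next
      case False
      thus ?thesis using i j by auto
    qed
  qed auto
  also have "det (four_block_mat ?UL (0\<^sub>m e m') ?LL ?LR) = det ?UL * det ?LR"
    by (rule det_four_block_mat_upper_right_zero, auto)
  also have "det ?LR = 1"
  proof -
    have cg: "\<And>k. n < k \<Longrightarrow> coeff g k = 0" using n by (auto intro!: coeff_eq_0)
    have "det ?LR = prod_list (diag_mat ?LR)"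
    proof (rule det_upper_triangular)
      show "upper_triangular ?LR"
      proof (rule upper_triangularI)
        fix i j assume ji: "j < i" and i: "i < dim_row ?LR"
        hence i: "i < m'" by auto
        have "?LR $$ (i,j) = [:coeff (monom 1 (m'-1-i) * g) (n + m' - 1 - j):]"
          using ji i by (auto simp: rowv_def)
        also have "\<dots> = 0" using ji i cg by (auto simp: coeff_monom_mult)
        finally show "?LR $$ (i,j) = 0" .
      qed
    qed auto
    also have "\<dots> = 1"
    proof -
      have d1: "?LR $$ (i,i) = 1" if i: "i < m'" for i
      proof -
        have "?LR $$ (i,i) = [:coeff (monom 1 (m'-1-i) * g) (n + m' - 1 - i):]"
          using i e by (auto simp: rowv_def)
        also have "\<dots> = 1" using i n lg by (auto simp: coeff_monom_mult)
        finally show "?LR $$ (i,i) = 1" .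
      qed
      show ?thesis by (subst prod_list_diag_prod, rule prod.neutral, insert d1, auto)
    qed
    finally show ?thesis .
  qed
  finally show ?thesis by simp
qed




definition Lag :: "'a::field set \<Rightarrow> 'a \<Rightarrow> 'a poly" where
  "Lag B b = smult (inverse (\<Prod>c\<in>B-{b}. (b - c))) (\<Prod>c\<in>B-{b}. [:-c,1:])"

lemma poly_prod_lin: "poly (\<Prod>c\<in>X. [:-c,1::'a::comm_ring_1:]) y = (\<Prod>c\<in>X. y - c)"
  by (simp add: poly_prod)

lemma degree_prod_lin: "finite X \<Longrightarrow> degree (\<Prod>c\<in>X. [:-c,1::'a::field:]) = card X"
  by (simp add: degree_prod_eq_sum_degree)

lemma lead_prod_lin: "lead_coeff (\<Prod>c\<in>X. [:-c,1::'a::field:]) = 1"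
  by (simp add: lead_coeff_prod)

lemma poly_Lag: assumes "finite B" "b \<in> B" "c \<in> B"
  shows "poly (Lag B b) c = (if c = b then 1 else 0)"
proof (cases "c = b")
  case True
  have "(\<Prod>x\<in>B - {b}. b - x) \<noteq> 0" using assms by (auto simp: prod_zero_iff)
  thus ?thesis using True unfolding Lag_def by (simp add: poly_prod_lin)
next
  case False
  hence "(\<Prod>x\<in>B - {b}. c - x) = 0" using assms by (auto simp: prod_zero_iff)
  thus ?thesis using False unfolding Lag_def by (simp add: poly_prod_lin)
qed

lemma degree_Lag: assumes "finite B" "b \<in> B" shows "degree (Lag B b) < card B"
proof -
  have "degree (Lag B b) \<le> degree (\<Prod>c\<in>B-{b}. [:-c,1:])" unfolding Lag_def by (rule degree_smult_le)
  also have "\<dots> = card (B - {b})" using assms by (simp add: degree_prod_lin)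
  also have "\<dots> < card B" by (rule card_Diff1_less[OF assms])
  finally show ?thesis .
qed

lemma many_roots_zero:
  fixes q :: "'a::field poly"
  assumes "finite B" "degree q < card B" "\<And>b. b \<in> B \<Longrightarrow> poly q b = 0"
  shows "q = 0"
proof (rule ccontr)
  assume q: "q \<noteq> 0"
  have "B \<subseteq> {x. poly q x = 0}" using assms by auto
  hence "card B \<le> card {x. poly q x = 0}" using poly_roots_finite[OF q] by (rule card_mono[rotated])
  also have "\<dots> \<le> degree q" by (rule card_poly_roots_bound[OF q])
  finally show False using assms by simp
qed

lemma degree_sum_less:
  assumes "\<And>x. x \<in> A \<Longrightarrow> degree (f x) < k" "0 < k"
  shows "degree (sum f A) < (k::nat)"
  using assms by (induction A rule: infinite_finite_induct) (auto intro!: degree_add_less)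

lemma interp:
  fixes p :: "'a::field poly"
  assumes B: "finite B" and dp: "degree p < card B"
  shows "p = (\<Sum>b\<in>B. smult (poly p b) (Lag B b))"
proof -
  let ?s = "(\<Sum>b\<in>B. smult (poly p b) (Lag B b))"
  have "p - ?s = 0"
  proof (rule many_roots_zero[OF B])
    have "degree ?s < card B"
      using degree_Lag[OF B] dp by (intro degree_sum_less) (auto intro: le_less_trans[OF degree_smult_le])
    thus "degree (p - ?s) < card B" using dp by (intro degree_diff_less)
    fix c assume c: "c \<in> B"
    have "poly ?s c = (\<Sum>b\<in>B. poly p b * (if c = b then 1 else 0))"
      by (simp add: poly_sum poly_Lag[OF B _ c])
    also have "\<dots> = poly p c" using B c by (simp add: if_distrib cong: if_cong)
    finally show "poly (p - ?s) c = 0" by simp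
  qed
  thus ?thesis by simp
qed




definition diagm :: "nat \<Rightarrow> (nat \<Rightarrow> 'a::comm_ring_1) \<Rightarrow> 'a poly mat" where
  "diagm e D = mat e e (\<lambda>(i,j). if i = j then [:D j:] else 0)"

lemma smult_if0: "smult c (if P then a else 0) = (if P then smult c a else 0)" by simp

lemma mult_diagm: "mat e e (\<lambda>(i,j). [:X i j:]) * diagm e D = mat e e (\<lambda>(i,j). [:X i j * D j:])"
proof (rule eq_matI)
  fix i j assume i: "i < dim_row (mat e e (\<lambda>(i,j). [:X i j * D j:]))"
    and j: "j < dim_col (mat e e (\<lambda>(i,j). [:X i j * D j:]))"
  hence i: "i < e" and j: "j < e" by auto
  have "(mat e e (\<lambda>(i,j). [:X i j:]) * diagm e D) $$ (i,j) = [:X i j * D j:]"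
    using i j unfolding diagm_def by (simp add: scalar_prod_def smult_if0 mult.commute)
  thus "(mat e e (\<lambda>(i,j). [:X i j:]) * diagm e D) $$ (i,j) = mat e e (\<lambda>(i,j). [:X i j * D j:]) $$ (i,j)"
    using i j by simp
qed (auto simp: diagm_def)

lemma det_diagm: "det (diagm e D) = [:\<Prod>j<e. D j:]"
proof -
  have "det (diagm e D) = prod_list (diag_mat (diagm e D))"
    by (rule det_upper_triangular, auto simp: diagm_def upper_triangular_def)
  also have "\<dots> = (\<Prod>j<e. [:D j:])"
    by (subst prod_list_diag_prod, auto simp: diagm_def lessThan_atLeast0 intro!: prod.cong)
  also have "\<dots> = [:\<Prod>j<e. D j:]" by (rule prod_to_poly)
  finally show ?thesis .
qed

lemma diagm_carrier[simp]: "diagm e D \<in> carrier_mat e e" unfolding diagm_def by simp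

lemma subset_term:
  fixes f :: "'a::field poly" and B S :: "'a set"
  assumes B: "finite B" and n: "card B = n" and e: "0 < e"
    and S: "S \<subseteq> B" "card S = e" and s: "bij_betw s {..<e} S"
  shows "det (mat e e (\<lambda>(i,j). [:s j ^ (e-1-i) * poly f (s j):])) * det (rmat e e n (\<lambda>j. Lag B (s j)))
      = smult ((\<Prod>x\<in>S. poly f x) / (\<Prod>x\<in>S. \<Prod>c\<in>B-S. (x - c))) (Res_x (B - S))"
proof -
  let ?V = "mat e e (\<lambda>(i,j). [:s j ^ (e-1-i):])"
  let ?RB = "rmat e e n (\<lambda>j. Lag B (s j))"
  define rho where "rho = (\<lambda>x. \<Prod>c\<in>B-S. (x - c))"
  define Q where "Q = Res_x (B - S)"
  define u where "u = (\<lambda>i. monom 1 (e-1-i) * Q)"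
  have fS: "finite S" using B S finite_subset by auto
  have sS: "\<And>j. j < e \<Longrightarrow> s j \<in> S" using s unfolding bij_betw_def by auto
  have degQ: "degree Q = n - e" unfolding Q_def Res_x_def using B S n
    by (simp add: degree_prod_lin card_Diff_subset fS)
  have lQ: "lead_coeff Q = 1" unfolding Q_def Res_x_def by (rule lead_prod_lin)
  have en: "e \<le> n" using S n B card_mono by metis
  have polyQ: "\<And>x. poly Q x = rho x" unfolding Q_def Res_x_def rho_def by (rule poly_prod_lin)
  have hu: "u i = (\<Sum>j<e. smult (s j ^ (e-1-i) * rho (s j)) (Lag B (s j)))" if i: "i < e" for i
  proof -
    have du: "degree (u i) < card B"
    proof -
      have "degree (u i) \<le> degree (monom (1::'a) (e-1-i)) + degree Q" unfolding u_def by (rule degree_mult_le)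
      moreover have "degree (monom (1::'a) (e-1-i)) \<le> e-1-i" by (rule degree_monom_le)
      ultimately show ?thesis using degQ n i en by linarith
    qed
    have pu: "poly (u i) x = x ^ (e-1-i) * rho x" for x
      unfolding u_def by (simp add: poly_monom polyQ)
    have "u i = (\<Sum>b\<in>B. smult (poly (u i) b) (Lag B b))" by (rule interp[OF B du])
    also have "\<dots> = (\<Sum>b\<in>S. smult (poly (u i) b) (Lag B b))"
    proof (rule sum.mono_neutral_right[OF B S(1)], rule ballI)
      fix b assume b: "b \<in> B - S"
      have "rho b = 0" unfolding rho_def using B b by (auto simp: prod_zero_iff)
      thus "smult (poly (u i) b) (Lag B b) = 0" by (simp add: pu)
    qed
    also have "\<dots> = (\<Sum>j<e. smult (poly (u i) (s j)) (Lag B (s j)))"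
      by (rule sum.reindex_bij_betw[OF s, symmetric])
    finally show ?thesis by (simp add: pu)
  qed
  have RBc: "?RB \<in> carrier_mat e e" by simp
  have Vc: "?V \<in> carrier_mat e e" by simp
  have "rmat e e n u = mat e e (\<lambda>(i,j). [:s j ^ (e-1-i) * rho (s j):]) * ?RB"
    by (rule rmat_lin, rule hu)
  also have "mat e e (\<lambda>(i,j). [:s j ^ (e-1-i) * rho (s j):]) = ?V * diagm e (\<lambda>j. rho (s j))"
    by (rule mult_diagm[symmetric])
  finally have ru: "rmat e e n u = ?V * diagm e (\<lambda>j. rho (s j)) * ?RB" .
  have detu: "det (rmat e e n u) = Q"
  proof -
    have "det (rmat e e n u) = prod_list (diag_mat (rmat e e n u))"
    proof (rule det_upper_triangular[of _ e])
      show "upper_triangular (rmat e e n u)"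
      proof (rule upper_triangularI)
        fix i j assume ji: "j < i" and i: "i < dim_row (rmat e e n u)"
        hence i: "i < e" by simp
        have "rmat e e n u $$ (i,j) = [:coeff (u i) (n - 1 - j):]"
          using ji i by (auto simp: rowv_def)
        also have "coeff (u i) (n - 1 - j) = 0"
          unfolding u_def coeff_monom_mult using ji i en degQ
          by (auto intro!: coeff_eq_0)
        finally show "rmat e e n u $$ (i,j) = 0" by simp
      qed
    qed simp
    also have "\<dots> = (\<Prod>i\<in>{0..<e}. if i = e - 1 then Q else 1)"
      unfolding prod_list_diag_prod rmat_dims
    proof (rule prod.cong[OF refl])
      fix i assume "i \<in> {0..<e}"
      hence i: "i < e" by simp
      show "rmat e e n u $$ (i,i) = (if i = e - 1 then Q else 1)"
      proof (cases "i = e - 1")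
        case True thus ?thesis using i by (simp add: rowv_def u_def)
      next
        case False
        have "rmat e e n u $$ (i,i) = [:coeff (u i) (n - 1 - i):]"
          using False i by (simp add: rowv_def)
        also have "coeff (u i) (n - 1 - i) = coeff Q (n - e)"
          unfolding u_def coeff_monom_mult using i en False by (auto intro!: arg_cong[of _ _ "coeff Q"])
        also have "\<dots> = 1" using lQ degQ by simp
        finally show ?thesis using False by simp
      qed
    qed
    also have "\<dots> = Q" using e by (simp add: prod.delta)
    finally show ?thesis .
  qed
  have "Q = det (?V * diagm e (\<lambda>j. rho (s j)) * ?RB)" using detu ru by simp
  also have "\<dots> = det ?V * [:\<Prod>j<e. rho (s j):] * det ?RB"
    by (subst det_mult[OF mult_carrier_mat[OF Vc diagm_carrier] RBc], subst det_mult[OF Vc diagm_carrier], simp add: det_diagm)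
  finally have Qeq: "Q = det ?V * [:\<Prod>j<e. rho (s j):] * det ?RB" .
  have CA: "mat e e (\<lambda>(i,j). [:s j ^ (e-1-i) * poly f (s j):]) = ?V * diagm e (\<lambda>j. poly f (s j))"
    by (rule mult_diagm[symmetric])
  have dCA: "det (mat e e (\<lambda>(i,j). [:s j ^ (e-1-i) * poly f (s j):])) = det ?V * [:\<Prod>j<e. poly f (s j):]"
    unfolding CA by (subst det_mult[OF Vc diagm_carrier], simp add: det_diagm)
  have pf: "(\<Prod>j<e. poly f (s j)) = (\<Prod>x\<in>S. poly f x)" by (rule prod.reindex_bij_betw[OF s])
  have pr: "(\<Prod>j<e. rho (s j)) = (\<Prod>x\<in>S. rho x)" by (rule prod.reindex_bij_betw[OF s])
  have rnz: "(\<Prod>x\<in>S. rho x) \<noteq> 0" unfolding rho_def using fS B by (auto simp: prod_zero_iff)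
  let ?L = "det (mat e e (\<lambda>(i,j). [:s j ^ (e-1-i) * poly f (s j):])) * det ?RB"
  have "?L * [:\<Prod>x\<in>S. rho x:] = [:\<Prod>x\<in>S. poly f x:] * Q"
    unfolding dCA Qeq pf pr by (simp add: ac_simps)
  hence "smult (inverse (\<Prod>x\<in>S. rho x)) (?L * [:\<Prod>x\<in>S. rho x:]) = smult (inverse (\<Prod>x\<in>S. rho x)) ([:\<Prod>x\<in>S. poly f x:] * Q)"
    by simp
  hence "?L = smult (inverse (\<Prod>x\<in>S. rho x)) ([:\<Prod>x\<in>S. poly f x:] * Q)"
    using rnz by (simp add: mult.commute[of ?L])
  thus ?thesis unfolding Q_def rho_def by (simp add: divide_inverse mult.commute)
qed




lemma poly_mod_root: "poly g b = 0 \<Longrightarrow> poly (p mod g) b = poly (p::'a::field poly) b"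
proof -
  assume g: "poly g b = 0"
  have "poly p b = poly (p div g * g + p mod g) b" by (simp only: div_mult_mod_eq)
  also have "\<dots> = poly (p mod g) b" using g by (simp only: poly_add poly_mult mult_zero_right add_0_left)
  finally show ?thesis by simp
qed

lemma reduced:
  fixes f :: "'a::field poly" and B :: "'a set"
  assumes B: "finite B" and n: "card B = n" and e: "0 < e" and en: "e \<le> n"
  shows "det (rmat e e n (\<lambda>i. (monom 1 (e-1-i) * f) mod Res_x B)) =
    (\<Sum>S\<in>{S. S \<subseteq> B \<and> card S = e}. smult ((\<Prod>x\<in>S. poly f x) / (\<Prod>x\<in>S. \<Prod>c\<in>B-S. (x - c))) (Res_x (B - S)))"
proof -
  define g where "g = Res_x B"
  let ?r = "\<lambda>i. (monom 1 (e-1-i) * f) mod g"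
  have g0: "g \<noteq> 0" unfolding g_def Res_x_def using lead_prod_lin[of B] by (metis leading_coeff_0_iff zero_neq_one)
  have dg: "degree g = n" unfolding g_def Res_x_def using B n by (simp add: degree_prod_lin)
  have pg: "\<And>b. b \<in> B \<Longrightarrow> poly g b = 0" unfolding g_def Res_x_def using B
    by (auto simp: poly_prod_lin prod_zero_iff)
  obtain bs where bs0: "bij_betw bs {0..<card B} B" using ex_bij_betw_nat_finite[OF B] by blast
  have bs: "bij_betw bs {..<n} B" using bs0 n by (simp add: atLeast0LessThan)
  have bsB: "\<And>l. l < n \<Longrightarrow> bs l \<in> B" using bs unfolding bij_betw_def by auto
  let ?T = "\<lambda>S. smult ((\<Prod>x\<in>S. poly f x) / (\<Prod>x\<in>S. \<Prod>c\<in>B-S. (x - c))) (Res_x (B - S))"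
  let ?A = "mat e n (\<lambda>(i,l). [:bs l ^ (e-1-i) * poly f (bs l):])"
  let ?L = "rmat n e n (\<lambda>l. Lag B (bs l))"
  have hr: "?r i = (\<Sum>l<n. smult (bs l ^ (e-1-i) * poly f (bs l)) (Lag B (bs l)))" if i: "i < e" for i
  proof -
    have dr: "degree (?r i) < card B"
      using degree_mod_less[OF g0, of "monom 1 (e-1-i) * f"] dg n e en by auto
    have "?r i = (\<Sum>b\<in>B. smult (poly (?r i) b) (Lag B b))" by (rule interp[OF B dr])
    also have "\<dots> = (\<Sum>l<n. smult (poly (?r i) (bs l)) (Lag B (bs l)))"
      by (rule sum.reindex_bij_betw[OF bs, symmetric])
    also have "\<dots> = (\<Sum>l<n. smult (bs l ^ (e-1-i) * poly f (bs l)) (Lag B (bs l)))"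
      by (rule sum.cong[OF refl], simp add: poly_mod_root[OF pg[OF bsB]] poly_monom)
    finally show ?thesis .
  qed
  have "rmat e e n ?r = mat e n (\<lambda>(i,l). [:bs l ^ (e-1-i) * poly f (bs l):]) * ?L"
    by (rule rmat_lin, rule hr)
  hence "det (rmat e e n ?r) = det (?A * ?L)" by simp
  also have "\<dots> = (\<Sum>I\<in>{I. I \<subseteq> {0..<n} \<and> card I = e}.
     det (mat e e (\<lambda>(i,j). ?A $$ (i, pk I j))) * det (mat e e (\<lambda>(i,j). ?L $$ (pk I i, j))))"
    by (rule cauchy_binet, auto)
  also have "\<dots> = (\<Sum>I\<in>{I. I \<subseteq> {0..<n} \<and> card I = e}. ?T (bs ` I))"
  proof (rule sum.cong[OF refl])
    fix I assume I: "I \<in> {I. I \<subseteq> {0..<n} \<and> card I = e}"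
    hence I: "I \<subseteq> {0..<n}" "card I = e" by auto
    have fI: "finite I" using I finite_subset by auto
    define s where "s = (\<lambda>j. bs (pk I j))"
    have pkn: "\<And>j. j < e \<Longrightarrow> pk I j < n" using pk_in[OF fI] I by (auto simp: subset_iff)
    have 1: "mat e e (\<lambda>(i,j). ?A $$ (i, pk I j)) = mat e e (\<lambda>(i,j). [:s j ^ (e-1-i) * poly f (s j):])"
      by (rule eq_matI, auto simp: s_def pkn)
    have 2: "mat e e (\<lambda>(i,j). ?L $$ (pk I i, j)) = rmat e e n (\<lambda>j. Lag B (s j))"
      by (rule eq_matI, auto simp: s_def pkn)
    have bpk: "bij_betw (pk I) {..<e} I"
      using pk_inj[OF fI] pk_image[OF fI] I by (auto simp: bij_betw_def atLeast0LessThan)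
    have bsI: "bij_betw bs I (bs ` I)"
      by (rule bij_betw_subset[OF bs], insert I, auto)
    have sb: "bij_betw s {..<e} (bs ` I)" unfolding s_def
      using bij_betw_trans[OF bpk bsI] by (simp add: comp_def)
    have SB: "bs ` I \<subseteq> B" using bsB I by auto
    have cS: "card (bs ` I) = e" using sb by (simp add: bij_betw_same_card[symmetric])
    show "det (mat e e (\<lambda>(i,j). ?A $$ (i, pk I j))) * det (mat e e (\<lambda>(i,j). ?L $$ (pk I i, j))) = ?T (bs ` I)"
      unfolding 1 2 by (rule subset_term[OF B n e SB cS sb])
  qed
  also have "\<dots> = (\<Sum>S\<in>{S. S \<subseteq> B \<and> card S = e}. ?T S)"
  proof (rule sum.reindex_cong[symmetric])
    show "inj_on (image bs) {I. I \<subseteq> {0..<n} \<and> card I = e}"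
      by (rule inj_on_subset[OF inj_on_image_Pow[of bs "{0..<n}"]], insert bs,
          auto simp: bij_betw_def atLeast0LessThan)
    show "{S. S \<subseteq> B \<and> card S = e} = image bs ` {I. I \<subseteq> {0..<n} \<and> card I = e}"
    proof
      show "{S. S \<subseteq> B \<and> card S = e} \<subseteq> image bs ` {I. I \<subseteq> {0..<n} \<and> card I = e}"
      proof
        fix S assume "S \<in> {S. S \<subseteq> B \<and> card S = e}"
        hence S: "S \<subseteq> B" "card S = e" by auto
        define I where "I = {l. l < n \<and> bs l \<in> S}"
        have bI: "bs ` I = S" unfolding I_def using bs S unfolding bij_betw_def by (auto simp: image_iff)
        moreover have "inj_on bs I" using bs unfolding bij_betw_def I_def
          by (auto intro: inj_on_subset)
        ultimately have "card I = e" using S card_image by metis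
        moreover have "I \<subseteq> {0..<n}" unfolding I_def by auto
        ultimately show "S \<in> image bs ` {I. I \<subseteq> {0..<n} \<and> card I = e}" using bI by blast
      qed
      show "image bs ` {I. I \<subseteq> {0..<n} \<and> card I = e} \<subseteq> {S. S \<subseteq> B \<and> card S = e}"
      proof
        fix S assume "S \<in> image bs ` {I. I \<subseteq> {0..<n} \<and> card I = e}"
        then obtain I where I: "I \<subseteq> {0..<n}" "card I = e" and SI: "S = bs ` I" by auto
        have "inj_on bs I" using bs I inj_on_subset unfolding bij_betw_def by (auto simp: atLeast0LessThan)
        thus "S \<in> {S. S \<subseteq> B \<and> card S = e}" using I bsB SI by (auto simp: card_image)
      qed
    qed
  qed simp
  finally show ?thesis unfolding g_def .
qed




lemma Res_swap_neg:
  fixes X Y :: "'a::field set"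
  shows "Res X Y = (-1) ^ (card X * card Y) * (\<Prod>y\<in>Y. \<Prod>x\<in>X. (y - x))"
proof -
  have "Res X Y = (\<Prod>y\<in>Y. \<Prod>x\<in>X. (x - y))" unfolding Res_def by (rule prod.swap)
  also have "\<dots> = (\<Prod>y\<in>Y. (-1) ^ card X * (\<Prod>x\<in>X. (y - x)))"
  proof (rule prod.cong[OF refl])
    fix y
    have "(\<Prod>x\<in>X. (x - y)) = (\<Prod>x\<in>X. - (y - x))" by simp
    also have "\<dots> = (-1) ^ card X * (\<Prod>x\<in>X. (y - x))" by (rule prod_uminus)
    finally show "(\<Prod>x\<in>X. (x - y)) = (-1) ^ card X * (\<Prod>x\<in>X. (y - x))" .
  qed
  also have "\<dots> = ((-1) ^ card X) ^ card Y * (\<Prod>y\<in>Y. \<Prod>x\<in>X. (y - x))"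
    by (simp add: prod.distrib)
  finally show ?thesis by (simp add: power_mult)
qed

lemma Syl_0:
  fixes A B :: "'a::field set"
  assumes "finite A"
  shows "Syl 0 d A B = (\<Sum>B'\<in>{B'. B' \<subseteq> B \<and> card B' = d}.
     smult (Res A (B - B') / Res B' (B - B')) (Res_x B'))"
proof -
  have "{A'. A' \<subseteq> A \<and> card A' = 0} = {{}}"
  proof
    show "{A'. A' \<subseteq> A \<and> card A' = 0} \<subseteq> {{}}"
    proof
      fix x assume "x \<in> {A'. A' \<subseteq> A \<and> card A' = 0}"
      hence "x \<subseteq> A" "card x = 0" by auto
      hence "x = {}" using finite_subset[OF _ assms] by (simp add: card_eq_0_iff)
      thus "x \<in> {{}}" by simp
    qed
  qed auto
  thus ?thesis unfolding Syl_def by (simp add: Res_def Res_x_def)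
qed

lemma neg1_pow_poly: "(-1::'a::field poly) ^ k * p = smult ((-1) ^ k) p"
  by (induct k) auto

theorem proposition2p9:
  fixes A B :: "'a::field set" and d :: nat
  assumes "finite A" and "finite B"
    and "d < card B" and "d \<le> card A"
  shows "Syl 0 d A B = Sres (\<Prod>a\<in>A. [:- a, 1:]) (\<Prod>b\<in>B. [:- b, 1:]) d"
proof -
  note A = assms(1) and B = assms(2) and dn = assms(3) and dm = assms(4)
  define m where "m = card A"
  define n where "n = card B"
  define f where "f = (\<Prod>a\<in>A. [:- a, 1::'a:])"
  define g where "g = (\<Prod>b\<in>B. [:- b, 1::'a:])"
  define e where "e = n - d"
  define m' where "m' = m - d"
  have df: "degree f = m" unfolding f_def m_def using A by (rule degree_prod_lin)
  have dg: "degree g = n" unfolding g_def n_def using B by (rule degree_prod_lin)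
  have lg: "lead_coeff g = 1" unfolding g_def by (rule lead_prod_lin)
  have g0: "g \<noteq> 0" using lg by auto
  have e0: "0 < e" unfolding e_def n_def using dn by simp
  have en: "e \<le> n" unfolding e_def by simp
  let ?T = "\<lambda>S. smult ((\<Prod>x\<in>S. poly f x) / (\<Prod>x\<in>S. \<Prod>c\<in>B-S. (x - c))) (Res_x (B - S))"
  have "Sres f g d = det (rmat (e+m') (e+m') (degree g + m')
     (\<lambda>i. if i < e then (monom 1 (e-1-i) * f) mod g else monom 1 (m'-1-(i-e)) * g))"
    by (rule stepA[OF g0], insert dn dm, auto simp: dg df e_def m'_def n_def m_def)
  also have "\<dots> = (-1)^(e*m') * det (rmat e e n (\<lambda>i. (monom 1 (e-1-i) * f) mod g))"
    unfolding dg by (rule stepB[OF lg dg e0])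
  also have "det (rmat e e n (\<lambda>i. (monom 1 (e-1-i) * f) mod g)) = (\<Sum>S\<in>{S. S \<subseteq> B \<and> card S = e}. ?T S)"
    unfolding g_def using reduced[OF B n_def[symmetric] e0 en, of f] by (simp add: Res_x_def)
  also have "(-1)^(e*m') * (\<Sum>S\<in>{S. S \<subseteq> B \<and> card S = e}. ?T S) = (\<Sum>S\<in>{S. S \<subseteq> B \<and> card S = e}. smult ((-1)^(e*m')) (?T S))"
    by (simp only: sum_distrib_left neg1_pow_poly)
  finally have Sr: "Sres f g d = (\<Sum>S\<in>{S. S \<subseteq> B \<and> card S = e}. smult ((-1)^(e*m')) (?T S))" .
  have eq2: "(\<Sum>S\<in>{S. S \<subseteq> B \<and> card S = e}. smult ((-1)^(e*m')) (?T S)) = (\<Sum>B'\<in>{B'. B' \<subseteq> B \<and> card B' = d}.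
     smult (Res A (B - B') / Res B' (B - B')) (Res_x B'))"
  proof (rule sum.reindex_bij_witness[of _ "\<lambda>S. B - S" "\<lambda>B'. B - B'"])
    fix S assume "S \<in> {S. S \<subseteq> B \<and> card S = e}"
    hence S: "S \<subseteq> B" "card S = e" by auto
    have fS: "finite S" using S B finite_subset by auto
    have BBS: "B - (B - S) = S" using S by auto
    have cBS: "card (B - S) = d" using S B dn unfolding e_def n_def by (simp add: card_Diff_subset fS)
    show "B - (B - S) = S" by (rule BBS)
    show "B - S \<in> {B'. B' \<subseteq> B \<and> card B' = d}" using cBS by auto
    have pf: "poly f x = (\<Prod>a\<in>A. (x - a))" for x unfolding f_def by (rule poly_prod_lin)
    have r1: "Res A S = (-1) ^ (m * e) * (\<Prod>x\<in>S. poly f x)"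
      unfolding Res_swap_neg[of A S] pf m_def S(2) ..
    have r2: "Res (B - S) S = (-1) ^ (d * e) * (\<Prod>x\<in>S. \<Prod>c\<in>B-S. (x - c))"
      unfolding Res_swap_neg[of "B - S" S] cBS S(2) ..
    have mm: "m = m' + d" unfolding m'_def m_def using dm by simp
    have "Res A S / Res (B - S) S = (-1)^(e*m') * ((\<Prod>x\<in>S. poly f x) / (\<Prod>x\<in>S. \<Prod>c\<in>B-S. (x - c)))"
      unfolding r1 r2 mm by (simp add: power_add algebra_simps)
    thus "smult (Res A (B - (B - S)) / Res (B - S) (B - (B - S))) (Res_x (B - S)) = smult ((-1)^(e*m')) (?T S)"
      unfolding BBS by simp
  next
    fix B' assume "B' \<in> {B'. B' \<subseteq> B \<and> card B' = d}"
    hence B': "B' \<subseteq> B" "card B' = d" by auto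
    have fB': "finite B'" using B' B finite_subset by auto
    show "B - (B - B') = B'" using B' by auto
    show "B - B' \<in> {S. S \<subseteq> B \<and> card S = e}" using B' B unfolding e_def n_def by (auto simp: card_Diff_subset fB')
  qed
  have "Syl 0 d A B = (\<Sum>B'\<in>{B'. B' \<subseteq> B \<and> card B' = d}.
     smult (Res A (B - B') / Res B' (B - B')) (Res_x B'))" by (rule Syl_0[OF A])
  also have "\<dots> = (\<Sum>S\<in>{S. S \<subseteq> B \<and> card S = e}. smult ((-1)^(e*m')) (?T S))"
    by (rule eq2[symmetric])
  finally show ?thesis using Sr unfolding f_def g_def by simp
qed


end
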